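(* Let $\mathbf{k}$ be an algebraically closed field, $V=\mathbf{k}^n$, $G=\mathrm{GL}(V)$, $\underline{G}=G\ltimes V$. Let $(X,w)\in\mathcal{O}_{\lambda[q]}$ with $\lambda=(a_1\ge\dots\ge a_t>0)$. For $k\in\{0,1,\dots,t\}$, the enhanced number $\wp_k^{\lambda[q]}$ equals the maximum of $\dim\big(\mathbf{k}[X]\tilde w+\mathbf{k}[X]\nu_1+\dots+\mathbf{k}[X]\nu_k\big)$ as $\tilde w$ ranges over $w+\mathrm{im}\,X$ and $(\nu_1,\dots,\nu_k)$ ranges over $V^k$.
   Context: $\underline{G}$ is $G\times V$ with product $(g_1,v_1)(g_2,v_2)=(g_1g_2,g_1v_2+v_1)$ and adjoint action $\mathrm{Ad}(g,v)(X,w)=(gXg^{-1},-(gXg^{-1})v+gw)$. Write $\lambda=(b_1^{d_1}\cdots b_r^{d_r})$ with $b_1>\dots>b_r$ (each $b_i$ occurring $d_i>0$ times), $d_0=0$; an enhanced partition $\lambda[q]$ has $q\in\{d_0+\dots+d_{j-1}:1\le j\le r+1\}$. For a nilpotent of type $\lambda$ with Jordan basis $\{X^kv_i:1\le i\le t, 0\le k\le a_i-1\}$, $X^{a_i}v_i=0$, put $u_j=v_{d_1+\dots+d_j}$ ($1\le j\le r$), $u_{r+1}=0$; $\mathcal{O}_{\lambda[q]}$ is the $\underline{G}$-orbit of $(X,u_j)$ with $q=d_0+\dots+d_{j-1}$. With the convention $a_i=0$ for $i>t$, the enhanced number is $\wp_k^{\lambda[q]}=\sum_{i=1}^k a_i+\delta_{k+1,q}$,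 where $\delta_{k+1,q}=a_{k+1}$ if $k+1>q$ and $\delta_{k+1,q}=a_{k+1}-1$ otherwise. $\mathbf{k}[X]u$ denotes the span of $u,Xu,X^2u,\dots$. *)

theory Defs
  imports "HOL-Analysis.Analysis" "HOL-Computational_Algebra.Polynomial"
begin

text \<open>Vectors: V = k^n is the type ('k, 'n) vec = 'k ^ 'n, with 'n a finite index type,
  n = CARD('n). Endomorphisms of V are k-linear functions V \<Rightarrow> V; G = GL(V) consists of the
  bijective linear ones. A partition lambda = (a_1 \<ge> ... \<ge> a_t > 0) is a list; a_i is 1-indexed
  and a_i = 0 for i > t.\<close>

definition is_partition_of :: "nat list \<Rightarrow> nat \<Rightarrow> bool" where
  "is_partition_of lam n \<longleftrightarrow> sorted_wrt (\<ge>) lam \<and> (\<forall>x\<in>set lam. 0 < x) \<and> sum_list lam = n"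

definition part_a :: "nat list \<Rightarrow> nat \<Rightarrow> nat" where
  "part_a lam i = (if 1 \<le> i \<and> i \<le> length lam then lam ! (i - 1) else 0)"

text \<open>lambda = (b_1^{d_1} ... b_r^{d_r}), b_1 > ... > b_r.\<close>
definition part_b :: "nat list \<Rightarrow> nat \<Rightarrow> nat" where
  "part_b lam i = remdups lam ! (i - 1)"

definition part_r :: "nat list \<Rightarrow> nat" where
  "part_r lam = length (remdups lam)"

definition part_d :: "nat list \<Rightarrow> nat \<Rightarrow> nat" where
  "part_d lam i = (if i = 0 then 0 else length (filter (\<lambda>x. x = part_b lam i) lam))"

text \<open>D j = d_0 + d_1 + ... + d_j\<close>
definition part_D :: "nat list \<Rightarrow> nat \<Rightarrow> nat" where
  "part_D lam j = (\<Sum>i\<le>j. part_d lam i)"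

text \<open>Valid enhancement indices q = d_0 + ... + d_{j-1}, 1 \<le> j \<le> r+1.\<close>
definition enh_index :: "nat list \<Rightarrow> nat \<Rightarrow> nat \<Rightarrow> bool" where
  "enh_index lam q j \<longleftrightarrow> 1 \<le> j \<and> j \<le> part_r lam + 1 \<and> q = part_D lam (j - 1)"

text \<open>Jordan basis {X^k v_i : 1 \<le> i \<le> t, 0 \<le> k \<le> a_i - 1} with X^{a_i} v_i = 0.\<close>
definition jordan_basis ::
  "(('k::field)^'n \<Rightarrow> 'k^'n) \<Rightarrow> nat list \<Rightarrow> (nat \<Rightarrow> 'k^'n) \<Rightarrow> bool" where
  "jordan_basis X lam v \<longleftrightarrow>
     (let I = {(i, k). 1 \<le> i \<and> i \<le> length lam \<and> k < part_a lam i};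
          f = (\<lambda>(i, k). (X ^^ k) (v i))
      in inj_on f I \<and> vec.independent (f ` I) \<and> vec.span (f ` I) = UNIV)
     \<and> (\<forall>i. 1 \<le> i \<and> i \<le> length lam \<longrightarrow> (X ^^ part_a lam i) (v i) = 0)"

text \<open>u_j = v_{d_1+...+d_j} for 1 \<le> j \<le> r, u_{r+1} = 0.\<close>
definition u_vec :: "nat list \<Rightarrow> (nat \<Rightarrow> 'k::field^'n) \<Rightarrow> nat \<Rightarrow> 'k^'n" where
  "u_vec lam v j = (if j \<le> part_r lam then v (part_D lam j) else 0)"

text \<open>Adjoint action of (g, y) \<in> G \<ltimes> V on (X, w) \<in> gl(V) \<times> V.\<close>
definition Ad_action ::
  "(('k::field)^'n \<Rightarrow> 'k^'n) \<Rightarrow> 'k^'n \<Rightarrow> ('k^'n \<Rightarrow> 'k^'n) \<Rightarrow> 'k^'n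
     \<Rightarrow> (('k^'n \<Rightarrow> 'k^'n) \<times> ('k^'n))" where
  "Ad_action g y X w = (g \<circ> X \<circ> inv g, - ((g \<circ> X \<circ> inv g) y) + g w)"

definition is_GL :: "(('k::field)^'n \<Rightarrow> 'k^'n) \<Rightarrow> bool" where
  "is_GL g \<longleftrightarrow> Vector_Spaces.linear (*s) (*s) g \<and> bij g"

text \<open>The enhanced nilpotent orbit O_{lambda[q]}: the orbit of (X0, u_j) where X0 is a
  nilpotent of type lambda with a Jordan basis v and q = d_0 + ... + d_{j-1}.\<close>
definition enh_orbit :: "nat list \<Rightarrow> nat \<Rightarrow> ((('k::field)^'n \<Rightarrow> 'k^'n) \<times> ('k^'n)) set" where
  "enh_orbit lam q = {Ad_action g y X0 (u_vec lam v j) | g y X0 v j.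
      is_GL g \<and> Vector_Spaces.linear (*s) (*s) X0 \<and> jordan_basis X0 lam v \<and> enh_index lam q j}"

text \<open>Enhanced number wp_k^{lambda[q]}.\<close>
definition enh_number :: "nat list \<Rightarrow> nat \<Rightarrow> nat \<Rightarrow> nat" where
  "enh_number lam q k = (\<Sum>i=1..k. part_a lam i) +
      (if k + 1 > q then part_a lam (k + 1) else part_a lam (k + 1) - 1)"

text \<open>k[X]u = span of u, Xu, X^2u, ...\<close>
definition kX :: "(('k::field)^'n \<Rightarrow> 'k^'n) \<Rightarrow> 'k^'n \<Rightarrow> ('k^'n) set" where
  "kX X u = vec.span (range (\<lambda>m. (X ^^ m) u))"

end

theory Submission
  imports Defs
begin


lemma lin_pow:
  fixes X :: "'k::field^'n \<Rightarrow> 'k^'n"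
  assumes "Vector_Spaces.linear (*s) (*s) X"
  shows "Vector_Spaces.linear (*s) (*s) (X ^^ m)"
proof (induction m)
  case 0 then show ?case unfolding funpow_0 by (rule vec.linear_ident)
next
  case (Suc m)
  have "Vector_Spaces.linear (*s) (*s) (X \<circ> (X ^^ m))"
    using Vector_Spaces.linear_compose[OF Suc assms] .
  then show ?case by (simp only: funpow.simps)
qed

lemma pow_zero:
  fixes X :: "'k::field^'n \<Rightarrow> 'k^'n"
  assumes "Vector_Spaces.linear (*s) (*s) X"
  shows "(X ^^ m) 0 = 0"
  using lin_pow[OF assms] vec.linear_0 by blast

lemma pow_pow: "(X ^^ a) ((X ^^ b) x) = (X ^^ (a + b)) x"
  by (simp add: funpow_add)

lemma dim_union_card:
  fixes A B :: "('k::field^'n) set"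
  assumes "finite B"
  shows "vec.dim (A \<union> B) \<le> vec.dim A + card B"
  using assms
proof (induction B rule: finite_induct)
  case empty then show ?case by simp
next
  case (insert x F)
  have "vec.dim (A \<union> insert x F) = vec.dim (insert x (A \<union> F))" by simp
  also have "\<dots> \<le> vec.dim (A \<union> F) + 1" by (simp add: vec.dim_insert)
  finally show ?case using insert by simp
qed

lemma dim_union_dim:
  fixes A B :: "('k::field^'n) set"
  shows "vec.dim (A \<union> B) \<le> vec.dim A + vec.dim B"
proof -
  obtain C where C: "C \<subseteq> B" "vec.independent C" "B \<subseteq> vec.span C" "card C = vec.dim B"
    using vec.basis_exists by blast
  have fin: "finite C" using C(2) vec.finiteI_independent by blast
  have "vec.dim (A \<union> B) \<le> vec.dim (A \<union> C)"
  proof (rule vec.dim_mono)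
    have "B \<subseteq> vec.span (A \<union> C)" using C(3) vec.span_mono[of C "A \<union> C"] by blast
    moreover have "A \<subseteq> vec.span (A \<union> C)" using vec.span_superset by blast
    ultimately show "A \<union> B \<subseteq> vec.span (A \<union> C)" by blast
  qed
  also have "\<dots> \<le> vec.dim A + card C" by (rule dim_union_card[OF fin])
  finally show ?thesis using C(4) by linarith
qed

lemma dim_drop_mono:
  fixes X :: "'k::field^'n \<Rightarrow> 'k^'n"
  assumes lin: "Vector_Spaces.linear (*s) (*s) X" and ST: "S \<subseteq> T"
  shows "vec.dim (X ` T) + vec.dim S \<le> vec.dim (X ` S) + vec.dim T"
proof -
  obtain B where B: "B \<subseteq> S" "vec.independent B" "S \<subseteq> vec.span B" "card B = vec.dim S"
    using vec.basis_exists by blast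
  obtain C where C: "B \<subseteq> C" "C \<subseteq> T" "vec.independent C" "T \<subseteq> vec.span C"
    using vec.maximal_independent_subset_extend[of B T] B ST by blast
  have cC: "card C = vec.dim T" using C vec.basis_card_eq_dim by blast
  have finC: "finite C" using C(3) vec.finiteI_independent by blast
  have "X ` T \<subseteq> X ` vec.span C" using C(4) by blast
  also have "\<dots> = vec.span (X ` C)" using vec.linear_span_image[OF lin] by simp
  also have "X ` C = X ` B \<union> X ` (C - B)" using C(1) by blast
  finally have "X ` T \<subseteq> vec.span (X ` B \<union> X ` (C - B))" .
  then have "vec.dim (X ` T) \<le> vec.dim (X ` B \<union> X ` (C - B))"
    by (rule vec.dim_mono)
  also have "\<dots> \<le> vec.dim (X ` B) + card (X ` (C - B))"
    by (rule dim_union_card) (use finC in simp)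
  also have "\<dots> \<le> vec.dim (X ` S) + card (C - B)"
  proof -
    have "vec.dim (X ` B) \<le> vec.dim (X ` S)" using B(1) vec.dim_subset[of "X ` B" "X ` S"] by blast
    moreover have "card (X ` (C - B)) \<le> card (C - B)" using card_image_le[of "C - B" X] finC by blast
    ultimately show ?thesis by linarith
  qed
  also have "card (C - B) = card C - card B" using C(1) finC card_Diff_subset
    by (metis finite_subset)
  finally show ?thesis using cC B(4) card_mono[OF finC C(1)] by linarith
qed

definition gen_mod :: "('k::field^'n \<Rightarrow> 'k^'n) \<Rightarrow> ('k^'n) set \<Rightarrow> ('k^'n) set" where
  "gen_mod X Gs = vec.span (\<Union>x\<in>Gs. kX X x)"

lemma img_Suc: "(X ^^ Suc h) ` S = X ` ((X ^^ h) ` S)"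
  by (simp add: image_comp)

lemma pow_in_sub:
  fixes X :: "'k::field^'n \<Rightarrow> 'k^'n"
  assumes "X ` W \<subseteq> W" "x \<in> W"
  shows "(X ^^ m) x \<in> W"
  using assms by (induction m) auto

lemma kX_sub:
  fixes X :: "'k::field^'n \<Rightarrow> 'k^'n"
  assumes "vec.subspace W" "X ` W \<subseteq> W" "x \<in> W"
  shows "kX X x \<subseteq> W"
  unfolding kX_def using assms pow_in_sub[OF assms(2,3)]
  by (intro vec.span_minimal) auto

lemma gen_mod_sub:
  fixes X :: "'k::field^'n \<Rightarrow> 'k^'n"
  assumes "vec.subspace W" "X ` W \<subseteq> W" "Gs \<subseteq> W"
  shows "gen_mod X Gs \<subseteq> W"
  unfolding gen_mod_def using assms kX_sub[OF assms(1,2)]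
  by (intro vec.span_minimal) auto

lemma kX_self: "x \<in> kX X x"
proof -
  have "x = (X ^^ 0) x" by simp
  then show ?thesis unfolding kX_def by (metis rangeI vec.span_superset subsetD)
qed

lemma kX_pow: "(X ^^ m) x \<in> kX X x"
  unfolding kX_def by (meson rangeI vec.span_superset subsetD)

lemma kX_in_gen: "x \<in> Gs \<Longrightarrow> kX X x \<subseteq> gen_mod X Gs"
  unfolding gen_mod_def by (meson UN_upper vec.span_superset subset_trans)

lemma span_img_sub:
  assumes "\<And>y. y \<in> A \<Longrightarrow> y \<in> vec.span T"
  shows "vec.span A \<subseteq> vec.span T"
  using assms vec.span_mono[of A "vec.span T"] vec.span_span[of T] by blast

lemma level_p:
  fixes X :: "'k::field^'n \<Rightarrow> 'k^'n"
  assumes lin: "Vector_Spaces.linear (*s) (*s) X" and fin: "finite Gs"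
  shows "vec.dim ((X ^^ h) ` gen_mod X Gs) \<le> vec.dim ((X ^^ Suc h) ` gen_mod X Gs) + card Gs"
proof -
  define M where "M = gen_mod X Gs"
  define T where "T = (X ^^ Suc h) ` M \<union> (X ^^ h) ` Gs"
  have linh: "Vector_Spaces.linear (*s) (*s) (X ^^ h)" by (rule lin_pow[OF lin])
  have key: "(X ^^ h) ((X ^^ m) x) \<in> vec.span T" if x: "x \<in> Gs" for x m
  proof (cases m)
    case 0
    then have "(X ^^ h) ((X ^^ m) x) = (X ^^ h) x" by simp
    moreover have "(X ^^ h) x \<in> T" unfolding T_def using x by blast
    ultimately show ?thesis using vec.span_superset by (metis subsetD)
  next
    case (Suc m')
    have "(X ^^ h) ((X ^^ m) x) = (X ^^ Suc h) ((X ^^ m') x)"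
      using Suc by (simp only: pow_pow add_Suc_right add_Suc)
    moreover have "(X ^^ m') x \<in> M" unfolding M_def using kX_pow kX_in_gen x by blast
    ultimately have "(X ^^ h) ((X ^^ m) x) \<in> T" unfolding T_def by blast
    then show ?thesis using vec.span_superset by (metis subsetD)
  qed
  have "(X ^^ h) ` M = vec.span ((X ^^ h) ` (\<Union>x\<in>Gs. kX X x))"
    unfolding M_def gen_mod_def using vec.linear_span_image[OF linh] by metis
  also have "\<dots> \<subseteq> vec.span T"
  proof (rule span_img_sub)
    fix y assume "y \<in> (X ^^ h) ` (\<Union>x\<in>Gs. kX X x)"
    then obtain x z where x: "x \<in> Gs" and z: "z \<in> kX X x" and y: "y = (X ^^ h) z" by blast
    have "(X ^^ h) ` kX X x = vec.span ((X ^^ h) ` range (\<lambda>m. (X ^^ m) x))"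
      unfolding kX_def using vec.linear_span_image[OF linh] by metis
    also have "\<dots> \<subseteq> vec.span T"
      by (rule span_img_sub) (use key[OF x] in blast)
    finally show "y \<in> vec.span T" using y z by blast
  qed
  finally have "vec.dim ((X ^^ h) ` M) \<le> vec.dim T" by (rule vec.dim_mono)
  also have "\<dots> \<le> vec.dim ((X ^^ Suc h) ` M) + card ((X ^^ h) ` Gs)"
    unfolding T_def by (rule dim_union_card) (use fin in simp)
  also have "card ((X ^^ h) ` Gs) \<le> card Gs" by (rule card_image_le[OF fin])
  finally show ?thesis unfolding M_def by simp
qed

lemma level_W:
  fixes X :: "'k::field^'n \<Rightarrow> 'k^'n"
  assumes lin: "Vector_Spaces.linear (*s) (*s) X" and MW: "M \<subseteq> W"
  shows "vec.dim ((X ^^ h) ` M) + vec.dim ((X ^^ Suc h) ` W)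
     \<le> vec.dim ((X ^^ Suc h) ` M) + vec.dim ((X ^^ h) ` W)"
proof -
  have "(X ^^ h) ` M \<subseteq> (X ^^ h) ` W" using MW by (rule image_mono)
  from dim_drop_mono[OF lin this] show ?thesis unfolding img_Suc by linarith
qed

lemma dim_G:
  fixes X :: "'k::field^'n \<Rightarrow> 'k^'n"
  assumes lin: "Vector_Spaces.linear (*s) (*s) X" and fin: "finite Gs" and cG: "card Gs \<le> p"
    and W: "vec.subspace W" "X ` W \<subseteq> W" "Gs \<subseteq> W"
  shows "vec.dim (gen_mod X Gs) \<le> vec.dim ((X ^^ h) ` gen_mod X Gs)
     + (\<Sum>s<h. min p (vec.dim ((X ^^ s) ` W) - vec.dim ((X ^^ Suc s) ` W)))"
proof (induction h)
  case 0 then show ?case by simp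
next
  case (Suc h)
  let ?M = "gen_mod X Gs"
  have MW: "?M \<subseteq> W" by (rule gen_mod_sub[OF W])
  have a: "vec.dim ((X ^^ h) ` ?M) \<le> vec.dim ((X ^^ Suc h) ` ?M) + p"
    using level_p[OF lin fin, of h] cG by linarith
  have b: "vec.dim ((X ^^ h) ` ?M) + vec.dim ((X ^^ Suc h) ` W)
     \<le> vec.dim ((X ^^ Suc h) ` ?M) + vec.dim ((X ^^ h) ` W)"
    by (rule level_W[OF lin MW])
  have "vec.dim ((X ^^ h) ` ?M) \<le> vec.dim ((X ^^ Suc h) ` ?M) +
      min p (vec.dim ((X ^^ h) ` W) - vec.dim ((X ^^ Suc h) ` W))"
    using a b by linarith
  moreover have "(\<Sum>s<Suc h. min p (vec.dim ((X ^^ s) ` W) - vec.dim ((X ^^ Suc s) ` W))) =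
     (\<Sum>s<h. min p (vec.dim ((X ^^ s) ` W) - vec.dim ((X ^^ Suc s) ` W))) +
     min p (vec.dim ((X ^^ h) ` W) - vec.dim ((X ^^ Suc h) ` W))"
    by (rule sum.lessThan_Suc)
  ultimately show ?case using Suc.IH by linarith
qed



lemma min_card_eq:
  fixes a :: "nat \<Rightarrow> nat"
  assumes anti: "\<And>i j. 1 \<le> i \<Longrightarrow> i \<le> j \<Longrightarrow> a j \<le> a i"
    and zero: "\<And>i. t < i \<Longrightarrow> a i = 0"
  shows "min p (card {i\<in>{1..t}. s < a i}) = card {i\<in>{1..p}. s < a i}"
proof (cases "p = 0")
  case True then show ?thesis by simp
next
  case False
  show ?thesis
  proof (cases "s < a p")
    case True
    have sub: "{1..p} \<subseteq> {i\<in>{1..t}. s < a i}"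
    proof
      fix i assume i: "i \<in> {1..p}"
      have "a p \<le> a i" using anti[of i p] i by simp
      then have "s < a i" using True by simp
      moreover have "i \<le> t" using \<open>s < a i\<close> zero by (metis not_less not_less0)
      ultimately show "i \<in> {i\<in>{1..t}. s < a i}" using i by auto
    qed
    have "card {1..p} \<le> card {i\<in>{1..t}. s < a i}" by (rule card_mono[OF _ sub]) simp
    then have "p \<le> card {i\<in>{1..t}. s < a i}" by simp
    moreover have "{i\<in>{1..p}. s < a i} = {1..p}" using sub by auto
    ultimately show ?thesis by simp
  next
    case False
    have eq: "{i\<in>{1..t}. s < a i} = {i\<in>{1..p}. s < a i}"
    proof (rule set_eqI, rule iffI)
      fix i assume i: "i \<in> {i\<in>{1..t}. s < a i}"
      have "i \<le> p"
      proof (rule ccontr)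
        assume "\<not> i \<le> p"
        then have "a i \<le> a p" using anti[of p i] \<open>p \<noteq> 0\<close> by simp
        then show False using i False by simp
      qed
      then show "i \<in> {i\<in>{1..p}. s < a i}" using i by simp
    next
      fix i assume i: "i \<in> {i\<in>{1..p}. s < a i}"
      have "i \<le> t" using i zero by (metis (mono_tags, lifting) mem_Collect_eq not_less not_less0)
      then show "i \<in> {i\<in>{1..t}. s < a i}" using i by simp
    qed
    have "card {i\<in>{1..p}. s < a i} \<le> card {1..p}" by (rule card_mono) auto
    then have "card {i\<in>{1..p}. s < a i} \<le> p" by simp
    then show ?thesis using eq by simp
  qed
qed

lemma card_filter_sum:
  assumes "finite A"
  shows "card {x\<in>A. P x} = (\<Sum>x\<in>A. if P x then 1 else 0)"
  using sum.inter_filter[OF assms, of "\<lambda>_. 1::nat" P] by simp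

lemma sum_min_card:
  fixes a :: "nat \<Rightarrow> nat"
  assumes anti: "\<And>i j. 1 \<le> i \<Longrightarrow> i \<le> j \<Longrightarrow> a j \<le> a i"
    and zero: "\<And>i. t < i \<Longrightarrow> a i = 0"
    and bnd: "\<And>i. a i \<le> N"
  shows "(\<Sum>s<N. min p (card {i\<in>{1..t}. s < a i})) = (\<Sum>i=1..p. a i)"
proof -
  have "(\<Sum>s<N. min p (card {i\<in>{1..t}. s < a i})) = (\<Sum>s<N. card {i\<in>{1..p}. s < a i})"
    using min_card_eq[OF anti zero] by simp
  also have "\<dots> = (\<Sum>s<N. \<Sum>i=1..p. if s < a i then 1 else 0)"
    by (simp only: card_filter_sum[OF finite_atLeastAtMost])
  also have "\<dots> = (\<Sum>i=1..p. \<Sum>s<N. if s < a i then 1 else 0)"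
    by (rule sum.swap)
  also have "\<dots> = (\<Sum>i=1..p. card {s\<in>{..<N}. s < a i})"
    by (simp only: card_filter_sum[OF finite_lessThan])
  also have "\<dots> = (\<Sum>i=1..p. a i)"
  proof (rule sum.cong[OF refl])
    fix i
    have "{s\<in>{..<N}. s < a i} = {..<a i}" using bnd[of i] by auto
    then show "card {s\<in>{..<N}. s < a i} = a i" by simp
  qed
  finally show ?thesis .
qed



locale jordan =
  fixes X :: "'k::field^'n \<Rightarrow> 'k^'n" and lam :: "nat list" and v :: "nat \<Rightarrow> 'k^'n"
  assumes lin: "Vector_Spaces.linear (*s) (*s) X"
    and jb: "jordan_basis X lam v"
    and part: "is_partition_of lam CARD('n)"
begin

definition "II = {(i, k). 1 \<le> i \<and> i \<le> length lam \<and> k < part_a lam i}"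
definition "ff = (\<lambda>(i, k). (X ^^ k) (v i))"

lemma ff_simp[simp]: "ff (i, k) = (X ^^ k) (v i)" by (simp add: ff_def)

lemma basis: "inj_on ff II" "vec.independent (ff ` II)" "vec.span (ff ` II) = UNIV"
  using jb unfolding jordan_basis_def II_def ff_def Let_def by auto

lemma kill: "1 \<le> i \<Longrightarrow> i \<le> length lam \<Longrightarrow> (X ^^ part_a lam i) (v i) = 0"
  using jb unfolding jordan_basis_def by auto

lemma killm:
  assumes "1 \<le> i" "i \<le> length lam" "part_a lam i \<le> m"
  shows "(X ^^ m) (v i) = 0"
proof -
  have "(X ^^ m) (v i) = (X ^^ (m - part_a lam i)) ((X ^^ part_a lam i) (v i))"
    using assms(3) by (simp add: pow_pow)
  also have "\<dots> = 0" using kill[OF assms(1,2)] pow_zero[OF lin] by simp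
  finally show ?thesis .
qed

lemma a_zero: "length lam < i \<Longrightarrow> part_a lam i = 0"
  unfolding part_a_def by simp

lemma a_zero0: "part_a lam 0 = 0"
  unfolding part_a_def by simp

lemma a_pos: "1 \<le> i \<Longrightarrow> i \<le> length lam \<Longrightarrow> 0 < part_a lam i"
  using part unfolding part_a_def is_partition_of_def by auto

lemma a_anti:
  assumes "1 \<le> i" "i \<le> j"
  shows "part_a lam j \<le> part_a lam i"
proof (cases "j \<le> length lam")
  case True
  have s: "sorted_wrt (\<ge>) lam" using part unfolding is_partition_of_def by simp
  show ?thesis
  proof (cases "i = j")
    case False
    then have "i - 1 < j - 1" using assms by simp
    from sorted_wrt_nth_less[OF s this] True assms show ?thesis
      unfolding part_a_def by simp
  qed simp
next
  case False then show ?thesis using a_zero by simp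
qed

lemma sum_a: "(\<Sum>i=1..length lam. part_a lam i) = CARD('n)"
proof -
  have "CARD('n) = sum_list lam" using part unfolding is_partition_of_def by simp
  also have "\<dots> = (\<Sum>i=0..<length lam. lam ! i)" by (rule sum_list_sum_nth)
  also have "\<dots> = (\<Sum>i=1..length lam. lam ! (i - 1))"
    by (rule sum.reindex_bij_witness[of _ "\<lambda>i. i - 1" "\<lambda>i. i + 1"]) auto
  also have "\<dots> = (\<Sum>i=1..length lam. part_a lam i)"
    by (rule sum.cong) (auto simp: part_a_def)
  finally show ?thesis by simp
qed

lemma a_le_n: "part_a lam i \<le> CARD('n)"
proof (cases "1 \<le> i \<and> i \<le> length lam")
  case True
  have "part_a lam i \<le> (\<Sum>i=1..length lam. part_a lam i)"
    by (rule member_le_sum) (use True in auto)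
  then show ?thesis using sum_a by simp
next
  case False then show ?thesis unfolding part_a_def by auto
qed

lemma nil: assumes "CARD('n) \<le> N" shows "(X ^^ N) x = 0"
proof -
  have linN: "Vector_Spaces.linear (*s) (*s) (X ^^ N)" by (rule lin_pow[OF lin])
  have "x \<in> vec.span (ff ` II)" using basis(3) by simp
  then have "(X ^^ N) x \<in> (X ^^ N) ` vec.span (ff ` II)" by blast
  also have "\<dots> = vec.span ((X ^^ N) ` ff ` II)" by (rule vec.linear_span_image[OF linN, symmetric])
  also have "(X ^^ N) ` ff ` II \<subseteq> {0}"
  proof clarify
    fix i k assume "(i, k) \<in> II"
    then have ik: "1 \<le> i" "i \<le> length lam" unfolding II_def by auto
    have "(X ^^ N) (ff (i, k)) = (X ^^ (N + k)) (v i)" by (simp add: pow_pow)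
    also have "\<dots> = 0" using killm[OF ik] a_le_n[of i] assms by simp
    finally show "(X ^^ N) (ff (i, k)) = 0" .
  qed
  then have "vec.span ((X ^^ N) ` ff ` II) \<subseteq> vec.span {0}" by (rule vec.span_mono)
  finally show ?thesis by simp
qed

lemma card_le_dim:
  assumes "J \<subseteq> II" "ff ` J \<subseteq> vec.span S"
  shows "card J \<le> vec.dim S"
proof -
  have ind: "vec.independent (ff ` J)" using vec.independent_mono[OF basis(2)] assms(1) by blast
  have "card (ff ` J) = card J" using card_image inj_on_subset[OF basis(1) assms(1)] by blast
  moreover have "card (ff ` J) \<le> vec.dim (vec.span S)"
    using vec.independent_card_le_dim[OF assms(2) ind] .
  ultimately show ?thesis by simp
qed

definition "JJ s = {(i, k). (i, k) \<in> II \<and> s \<le> k}"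

lemma img_pow: "(X ^^ s) ` UNIV = vec.span (ff ` JJ s)"
proof -
  have linS: "Vector_Spaces.linear (*s) (*s) (X ^^ s)" by (rule lin_pow[OF lin])
  have "(X ^^ s) ` UNIV = (X ^^ s) ` vec.span (ff ` II)" using basis(3) by simp
  also have "\<dots> = vec.span ((X ^^ s) ` ff ` II)" by (rule vec.linear_span_image[OF linS, symmetric])
  also have "\<dots> = vec.span (ff ` JJ s)"
  proof (rule vec.span_eq[THEN iffD2], rule conjI)
    show "(X ^^ s) ` ff ` II \<subseteq> vec.span (ff ` JJ s)"
    proof clarify
      fix i k assume ik: "(i, k) \<in> II"
      have eq: "(X ^^ s) (ff (i, k)) = (X ^^ (s + k)) (v i)" by (simp add: pow_pow)
      show "(X ^^ s) (ff (i, k)) \<in> vec.span (ff ` JJ s)"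
      proof (cases "s + k < part_a lam i")
        case True
        then have "(i, s + k) \<in> JJ s" using ik unfolding JJ_def II_def by auto
        then have "ff (i, s + k) \<in> ff ` JJ s" by blast
        then have "ff (i, s + k) \<in> vec.span (ff ` JJ s)" using vec.span_superset by blast
        moreover have "(X ^^ s) (ff (i, k)) = ff (i, s + k)" using eq by (simp only: ff_simp)
        ultimately show ?thesis by (simp only:)
      next
        case False
        have i1: "1 \<le> i" and i2: "i \<le> length lam" using ik unfolding II_def by auto
        have le: "part_a lam i \<le> s + k" using \<open>\<not> s + k < part_a lam i\<close> by linarith
        have z: "(X ^^ (s + k)) (v i) = 0" by (rule killm[OF i1 i2 le])
        have "(X ^^ s) (ff (i, k)) = 0" by (rule trans[OF eq z])
        then show ?thesis using vec.span_zero by (metis)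
      qed
    qed
    show "ff ` JJ s \<subseteq> vec.span ((X ^^ s) ` ff ` II)"
    proof clarify
      fix i k assume ik: "(i, k) \<in> JJ s"
      have d: "(i, k) \<in> II" "s \<le> k" using ik unfolding JJ_def by auto
      have d2: "(i, k - s) \<in> II" using d unfolding II_def by auto
      have eq2: "(X ^^ s) (ff (i, k - s)) = ff (i, k)" using d(2) by (simp add: pow_pow)
      have "ff (i, k - s) \<in> ff ` II" using d2 by (rule imageI)
      then have "(X ^^ s) (ff (i, k - s)) \<in> (X ^^ s) ` ff ` II" by (rule imageI)
      then have "ff (i, k) \<in> (X ^^ s) ` ff ` II" by (simp only: eq2)
      then show "ff (i, k) \<in> vec.span ((X ^^ s) ` ff ` II)" by (rule subsetD[OF vec.span_superset])
    qed
  qed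
  finally show ?thesis .
qed

lemma JJ_sub: "JJ s \<subseteq> II" unfolding JJ_def by auto

lemma card_JJ: "card (JJ s) = (\<Sum>i=1..length lam. part_a lam i - s)"
proof -
  have "JJ s = Sigma {1..length lam} (\<lambda>i. {s..<part_a lam i})"
    unfolding JJ_def II_def by auto
  moreover have "card (Sigma {1..length lam} (\<lambda>i. {s..<part_a lam i})) = (\<Sum>i\<in>{1..length lam}. card {s..<part_a lam i})"
    by (rule card_SigmaI) auto
  ultimately show ?thesis by simp
qed

lemma dim_pow: "vec.dim ((X ^^ s) ` UNIV) = (\<Sum>i=1..length lam. part_a lam i - s)"
proof -
  have ind: "vec.independent (ff ` JJ s)" using vec.independent_mono[OF basis(2)] JJ_sub by blast
  have "vec.dim ((X ^^ s) ` UNIV) = card (ff ` JJ s)"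
    unfolding img_pow using vec.dim_span_eq_card_independent[OF ind] .
  also have "\<dots> = card (JJ s)" using card_image inj_on_subset[OF basis(1) JJ_sub] by blast
  finally show ?thesis using card_JJ by simp
qed

lemma cdiff: "vec.dim ((X ^^ s) ` UNIV) - vec.dim ((X ^^ Suc s) ` UNIV)
   = card {i\<in>{1..length lam}. s < part_a lam i}"
proof -
  have pw: "\<And>i. part_a lam i - s = (part_a lam i - Suc s) + (if s < part_a lam i then 1 else 0)"
    by auto
  have "(\<Sum>i=1..length lam. part_a lam i - s) = (\<Sum>i=1..length lam. (part_a lam i - Suc s)
     + (if s < part_a lam i then 1 else 0))"
    by (rule sum.cong[OF refl pw])
  also have "\<dots> = (\<Sum>i=1..length lam. part_a lam i - Suc s)
     + (\<Sum>i=1..length lam. if s < part_a lam i then (1::nat) else 0)"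
    by (rule sum.distrib)
  finally show ?thesis unfolding dim_pow card_filter_sum[OF finite_atLeastAtMost] by linarith
qed

end


lemma comm_pow:
  assumes "\<And>x. L (X x) = X (L x)"
  shows "L ((X ^^ n) x) = (X ^^ n) (L x)"
  by (induction n) (simp_all add: assms)

lemma kX_img:
  fixes X L :: "'k::field^'n \<Rightarrow> 'k^'n"
  assumes lin: "Vector_Spaces.linear (*s) (*s) L" and c: "\<And>x. L (X x) = X (L x)"
  shows "L ` kX X x = kX X (L x)"
proof -
  have "L ` kX X x = vec.span (L ` range (\<lambda>n. (X ^^ n) x))"
    unfolding kX_def by (rule vec.linear_span_image[OF lin, symmetric])
  also have "L ` range (\<lambda>n. (X ^^ n) x) = range (\<lambda>n. (X ^^ n) (L x))"
    using comm_pow[of L X, OF c] by (simp add: image_image)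
  finally show ?thesis unfolding kX_def .
qed

lemma gen_mod_img:
  fixes X L :: "'k::field^'n \<Rightarrow> 'k^'n"
  assumes lin: "Vector_Spaces.linear (*s) (*s) L" and c: "\<And>x. L (X x) = X (L x)"
  shows "L ` gen_mod X Gs = gen_mod X (L ` Gs)"
proof -
  have "L ` gen_mod X Gs = vec.span (L ` (\<Union>x\<in>Gs. kX X x))"
    unfolding gen_mod_def by (rule vec.linear_span_image[OF lin, symmetric])
  also have "L ` (\<Union>x\<in>Gs. kX X x) = (\<Union>x\<in>Gs. L ` kX X x)" by (rule image_UN)
  also have "\<dots> = (\<Union>x\<in>Gs. kX X (L x))" using kX_img[of L X, OF lin c] by simp
  also have "\<dots> = (\<Union>y\<in>L ` Gs. kX X y)" by simp
  finally show ?thesis unfolding gen_mod_def .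
qed

lemma gen_mod_inv:
  fixes X :: "'k::field^'n \<Rightarrow> 'k^'n"
  assumes lin: "Vector_Spaces.linear (*s) (*s) X"
  shows "X ` gen_mod X Gs \<subseteq> gen_mod X Gs"
proof -
  have "X ` gen_mod X Gs = gen_mod X (X ` Gs)"
    by (rule gen_mod_img[OF lin]) simp
  also have "\<dots> \<subseteq> gen_mod X Gs"
    unfolding gen_mod_def
  proof (rule vec.span_mono, clarify)
    fix x y assume x: "x \<in> Gs" and y: "y \<in> kX X (X x)"
    have "range (\<lambda>n. (X ^^ n) (X x)) \<subseteq> range (\<lambda>n. (X ^^ n) x)"
    proof clarify
      fix n
      have "(X ^^ n) (X x) = (X ^^ Suc n) x" by (simp add: funpow_Suc_right del: funpow.simps)
      then show "(X ^^ n) (X x) \<in> range (\<lambda>n. (X ^^ n) x)" by (metis rangeI)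
    qed
    then have "kX X (X x) \<subseteq> kX X x" unfolding kX_def by (rule vec.span_mono)
    then show "y \<in> (\<Union>x\<in>Gs. kX X x)" using x y by blast
  qed
  finally show ?thesis .
qed

lemma gen_mod_pow_inv:
  fixes X :: "'k::field^'n \<Rightarrow> 'k^'n"
  assumes lin: "Vector_Spaces.linear (*s) (*s) X" and "x \<in> gen_mod X Gs"
  shows "(X ^^ j) x \<in> gen_mod X Gs"
  using pow_in_sub[OF gen_mod_inv[OF lin] assms(2)] .

lemma gen_mod_mono: "Gs \<subseteq> Hs \<Longrightarrow> gen_mod X Gs \<subseteq> gen_mod X Hs"
  unfolding gen_mod_def by (rule vec.span_mono) blast

lemma sum_split_shift:
  fixes f :: "nat \<Rightarrow> nat"
  shows "(\<Sum>s<N + m. f s) = (\<Sum>s<m. f s) + (\<Sum>s<N. f (s + m))"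
proof (induction N)
  case 0 then show ?case by simp
next
  case (Suc N)
  have "(\<Sum>s<Suc N + m. f s) = (\<Sum>s<N + m. f s) + f (N + m)" by simp
  then show ?case using Suc by simp
qed

context jordan
begin

definition "cc s = card {i\<in>{1..length lam}. s < part_a lam i}"

lemma sum_cc:
  assumes "CARD('n) \<le> N"
  shows "(\<Sum>s<N. min p (cc s)) = (\<Sum>i=1..p. part_a lam i)"
  unfolding cc_def
  proof (rule sum_min_card)
  show "\<And>i j. 1 \<le> i \<Longrightarrow> i \<le> j \<Longrightarrow> part_a lam j \<le> part_a lam i" by (rule a_anti)
  show "\<And>i. length lam < i \<Longrightarrow> part_a lam i = 0" by (rule a_zero)
  show "\<And>i. part_a lam i \<le> N" by (rule le_trans[OF a_le_n assms])
qed

lemma subspace_img: "vec.subspace ((X ^^ m) ` UNIV)"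
  unfolding img_pow by simp

lemma X_img_inv: "X ` ((X ^^ m) ` UNIV) \<subseteq> (X ^^ m) ` UNIV"
proof clarify
  fix x
  have "X ((X ^^ m) x) = (X ^^ m) (X x)" by (simp add: funpow_swap1)
  then show "X ((X ^^ m) x) \<in> range (X ^^ m)" by (metis rangeI)
qed

lemma upper_W:
  assumes fin: "finite Gs" and cG: "card Gs \<le> p" and sub: "Gs \<subseteq> (X ^^ m) ` UNIV"
  shows "vec.dim (gen_mod X Gs) \<le> (\<Sum>s<CARD('n). min p (cc (s + m)))"
proof -
  let ?W = "(X ^^ m) ` UNIV"
  have G: "vec.dim (gen_mod X Gs) \<le> vec.dim ((X ^^ CARD('n)) ` gen_mod X Gs)
     + (\<Sum>s<CARD('n). min p (vec.dim ((X ^^ s) ` ?W) - vec.dim ((X ^^ Suc s) ` ?W)))"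
    by (rule dim_G[OF lin fin cG subspace_img X_img_inv sub])
  have "(X ^^ CARD('n)) ` gen_mod X Gs \<subseteq> {0}" using nil by auto
  then have z: "vec.dim ((X ^^ CARD('n)) ` gen_mod X Gs) = 0"
    by (metis vec.dim_empty vec.dim_singleton subset_singletonD)
  have e: "\<And>j. (X ^^ j) ` ?W = (X ^^ (j + m)) ` UNIV"
    by (simp add: image_comp funpow_add)
  have pw: "vec.dim ((X ^^ s) ` ?W) - vec.dim ((X ^^ Suc s) ` ?W) = cc (s + m)" for s
    unfolding e cc_def using cdiff[of "s + m"] by simp
  have "(\<Sum>s<CARD('n). min p (vec.dim ((X ^^ s) ` ?W) - vec.dim ((X ^^ Suc s) ` ?W)))
     = (\<Sum>s<CARD('n). min p (cc (s + m)))"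
    by (rule sum.cong[OF refl]) (simp only: pw)
  then show ?thesis using G z by linarith
qed

lemma upper_0:
  assumes fin: "finite Gs" and cG: "card Gs \<le> p"
  shows "vec.dim (gen_mod X Gs) \<le> (\<Sum>i=1..p. part_a lam i)"
proof -
  have "vec.dim (gen_mod X Gs) \<le> (\<Sum>s<CARD('n). min p (cc (s + 0)))"
    by (rule upper_W[OF fin cG]) simp
  then show ?thesis using sum_cc[of "CARD('n)" p] by simp
qed

lemma gen_mod_span: "vec.span (gen_mod X Gs) = gen_mod X Gs"
  unfolding gen_mod_def by (rule vec.span_span)

lemma gen_mod_subspace: "vec.subspace (gen_mod X Gs)"
  unfolding gen_mod_def by simp

lemma trick_in:
  assumes y: "y \<in> gen_mod X (insert (X y) B)"
  shows "y \<in> gen_mod X B"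
proof -
  define M2 where "M2 = gen_mod X B"
  define Y where "Y n = vec.span (M2 \<union> range (\<lambda>t. (X ^^ (n + t)) y))" for n
  have M2Y: "M2 \<subseteq> Y n" for n unfolding Y_def by (rule subset_trans[OF Un_upper1 vec.span_superset])
  have RY: "(X ^^ (n + t)) y \<in> Y n" for n t unfolding Y_def
    by (rule subsetD[OF vec.span_superset], rule UnI2, rule rangeI)
  have sY: "vec.span (Y n) = Y n" for n unfolding Y_def by (rule vec.span_span)
  have "gen_mod X (insert (X y) B) \<subseteq> Y 1"
    unfolding gen_mod_def
  proof (rule span_img_sub[of _ "Y 1", unfolded sY])
    fix z assume "z \<in> (\<Union>x\<in>insert (X y) B. kX X x)"
    then consider "z \<in> kX X (X y)" | b where "b \<in> B" "z \<in> kX X b" by blast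
    then show "z \<in> Y 1"
    proof cases
      case 1
      have "kX X (X y) \<subseteq> vec.span (Y 1)" unfolding kX_def
      proof (rule vec.span_mono, clarify)
        fix t
        have "(X ^^ t) (X y) = (X ^^ (1 + t)) y" by (simp add: funpow_Suc_right del: funpow.simps)
        then show "(X ^^ t) (X y) \<in> Y 1" using RY[of 1 t] by (simp only:)
      qed
      then show ?thesis using 1 sY by blast
    next
      case 2
      then have "z \<in> M2" unfolding M2_def using kX_in_gen by blast
      then show ?thesis using M2Y by blast
    qed
  qed
  then have y1: "y \<in> Y 1" using y by blast
  have Lj: "(X ^^ j) y \<in> Y (Suc j)" for j
  proof -
    have linj: "Vector_Spaces.linear (*s) (*s) (X ^^ j)" by (rule lin_pow[OF lin])
    have "(X ^^ j) y \<in> (X ^^ j) ` Y 1" using y1 by blast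
    also have "\<dots> = vec.span ((X ^^ j) ` (M2 \<union> range (\<lambda>t. (X ^^ (1 + t)) y)))"
      unfolding Y_def by (rule vec.linear_span_image[OF linj, symmetric])
    also have "\<dots> \<subseteq> Y (Suc j)"
    proof (rule span_img_sub[of _ "Y (Suc j)", unfolded sY])
      fix z assume "z \<in> (X ^^ j) ` (M2 \<union> range (\<lambda>t. (X ^^ (1 + t)) y))"
      then consider x where "x \<in> M2" "z = (X ^^ j) x" | t where "z = (X ^^ j) ((X ^^ (1 + t)) y)"
        by blast
      then show "z \<in> Y (Suc j)"
      proof cases
        case 1
        then have "z \<in> M2" unfolding M2_def using gen_mod_pow_inv[OF lin] by blast
        then show ?thesis using M2Y by blast
      next
        case 2
        have e1: "(X ^^ j) ((X ^^ (1 + t)) y) = (X ^^ (j + (1 + t))) y" by (rule pow_pow)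
        have e2: "j + (1 + t) = Suc j + t" by simp
        have "z = (X ^^ (Suc j + t)) y" using 2 e1 e2 by (simp only:)
        then show ?thesis using RY[of "Suc j" t] by (simp only:)
      qed
    qed
    finally show ?thesis .
  qed
  have subY: "vec.subspace (Y n)" for n unfolding Y_def by simp
  have YI: "Y n \<subseteq> Z" if "M2 \<subseteq> Z" "\<And>t. (X ^^ (n + t)) y \<in> Z" "vec.subspace Z" for n Z
    unfolding Y_def by (rule vec.span_minimal) (use that in blast)+
  have mono: "Y n \<subseteq> Y (Suc n)" for n
  proof (rule YI[OF M2Y _ subY])
    fix t
    have a: "(X ^^ (n + t)) y \<in> Y (Suc (n + t))" by (rule Lj)
    have "Y (Suc (n + t)) \<subseteq> Y (Suc n)"
    proof (rule YI[OF M2Y _ subY])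
      fix t'
      have "(X ^^ (Suc (n + t) + t')) y = (X ^^ (Suc n + (t + t'))) y" by (simp add: add.assoc)
      then show "(X ^^ (Suc (n + t) + t')) y \<in> Y (Suc n)" using RY[of "Suc n" "t + t'"] by (simp only:)
    qed
    then show "(X ^^ (n + t)) y \<in> Y (Suc n)" using a by blast
  qed
  have yN: "y \<in> Y (Suc n)" for n
  proof (induction n)
    case 0 then show ?case using y1 by simp
  next
    case (Suc n) then show ?case using mono by blast
  qed
  have "range (\<lambda>t. (X ^^ (CARD('n) + t)) y) = {0}" using nil by auto
  then have "Y CARD('n) = vec.span (insert 0 M2)" unfolding Y_def by simp
  also have "\<dots> = M2" unfolding M2_def by (simp add: gen_mod_span)
  finally have YM: "Y CARD('n) = M2" .
  have "Suc (CARD('n) - 1) = CARD('n)" by simp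
  then have "y \<in> Y CARD('n)" using yN[of "CARD('n) - 1"] by (simp only:)
  then show ?thesis using YM unfolding M2_def by simp
qed

lemma kX_in_inv:
  assumes "x \<in> gen_mod X Gs"
  shows "kX X x \<subseteq> gen_mod X Gs"
  by (rule kX_sub[OF gen_mod_subspace gen_mod_inv[OF lin] assms])

lemma sum_strict_k:
  assumes "Suc k \<le> cc m"
  shows "(\<Sum>s<CARD('n). min k (cc (s + m))) < (\<Sum>s<CARD('n). min (Suc k) (cc (s + m)))"
proof (rule sum_strict_mono_ex1)
  show "finite {..<CARD('n)}" by simp
  show "\<forall>x\<in>{..<CARD('n)}. min k (cc (x + m)) \<le> min (Suc k) (cc (x + m))" by auto
  have "0 \<in> {..<CARD('n)}" by simp
  moreover have "min k (cc (0 + m)) < min (Suc k) (cc (0 + m))" using assms by simp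
  ultimately show "\<exists>a\<in>{..<CARD('n)}. min k (cc (a + m)) < min (Suc k) (cc (a + m))" by blast
qed

lemma trick_bound:
  assumes yW: "y \<in> (X ^^ m) ` UNIV" and BW: "B \<subseteq> (X ^^ m) ` UNIV" and fin: "finite B"
    and cB: "card B \<le> k" and cm: "Suc k \<le> cc m"
  shows "vec.dim (gen_mod X (insert (X y) B)) + 1 \<le> (\<Sum>s<CARD('n). min (Suc k) (cc (s + m)))"
proof -
  let ?M0 = "gen_mod X (insert (X y) B)"
  let ?M1 = "gen_mod X (insert y B)"
  let ?M2 = "gen_mod X B"
  show ?thesis
  proof (cases "y \<in> ?M0")
    case True
    then have y2: "y \<in> ?M2" by (rule trick_in)
    have "X y \<in> ?M2" using gen_mod_inv[OF lin] y2 by blast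
    then have "kX X (X y) \<subseteq> ?M2" by (rule kX_in_inv)
    moreover have "kX X b \<subseteq> ?M2" if "b \<in> B" for b using kX_in_gen that by blast
    ultimately have "?M0 \<subseteq> ?M2" unfolding gen_mod_def[of X "insert (X y) B"]
      by (intro vec.span_minimal[OF _ gen_mod_subspace]) blast
    then have "vec.dim ?M0 \<le> vec.dim ?M2" by (rule vec.dim_subset)
    also have "\<dots> \<le> (\<Sum>s<CARD('n). min k (cc (s + m)))"
      by (rule upper_W[OF fin cB BW])
    finally show ?thesis using sum_strict_k[OF cm] by linarith
  next
    case False
    have y1: "y \<in> ?M1" using kX_self kX_in_gen[of y "insert y B" X] by blast
    have "X y \<in> ?M1" using gen_mod_inv[OF lin] y1 by blast
    then have "kX X (X y) \<subseteq> ?M1" by (rule kX_in_inv)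
    moreover have "kX X b \<subseteq> ?M1" if "b \<in> B" for b using kX_in_gen that by blast
    ultimately have "?M0 \<subseteq> ?M1" unfolding gen_mod_def[of X "insert (X y) B"]
      by (intro vec.span_minimal[OF _ gen_mod_subspace]) blast
    then have "vec.span ?M0 \<subset> vec.span ?M1" using y1 False unfolding gen_mod_span by blast
    then have "vec.dim ?M0 < vec.dim ?M1" by (rule vec.dim_psubset)
    also have "vec.dim ?M1 \<le> (\<Sum>s<CARD('n). min (Suc k) (cc (s + m)))"
    proof (rule upper_W)
      show "finite (insert y B)" using fin by simp
      show "card (insert y B) \<le> Suc k" using cB card_insert_le_m1 fin
        by (metis card_insert_if finite_insert le_SucI not_less_eq_eq)
      show "insert y B \<subseteq> (X ^^ m) ` UNIV" using yW BW by blast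
    qed
    finally show ?thesis by linarith
  qed
qed

lemma span_eq_gen:
  "vec.span (kX X w' \<union> (\<Union>i\<in>{1..k}. kX X (\<nu> i))) = gen_mod X (insert w' (\<nu> ` {1..k}))"
  unfolding gen_mod_def by simp

lemma card_Gs: "card (insert w' (\<nu> ` {1..k})) \<le> Suc k"
proof -
  have "card (insert w' (\<nu> ` {1..k})) \<le> Suc (card (\<nu> ` {1..k}))" by (simp add: card_insert_if)
  also have "card (\<nu> ` {1..k}) \<le> k" using card_image_le[of "{1..k}" \<nu>] by simp
  finally show ?thesis by simp
qed

lemma sum_Suc_a: "(\<Sum>i=1..Suc k. part_a lam i) = (\<Sum>i=1..k. part_a lam i) + part_a lam (Suc k)"
  by simp

lemma upper_main:
  assumes U: "(X ^^ m) u = 0" and q: "q = cc m"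
  shows "vec.dim (vec.span (kX X (u + X z) \<union> (\<Union>i\<in>{1..k}. kX X (\<nu> i)))) \<le> enh_number lam q k"
proof -
  define Gs where "Gs = insert (u + X z) (\<nu> ` {1..k})"
  define M where "M = gen_mod X Gs"
  have eqM: "vec.span (kX X (u + X z) \<union> (\<Union>i\<in>{1..k}. kX X (\<nu> i))) = M"
    unfolding M_def Gs_def by (rule span_eq_gen)
  have fin: "finite Gs" unfolding Gs_def by simp
  have cG: "card Gs \<le> Suc k" unfolding Gs_def by (rule card_Gs)
  show ?thesis
  proof (cases "k + 1 > q")
    case True
    then have e: "enh_number lam q k = (\<Sum>i=1..Suc k. part_a lam i)"
      unfolding enh_number_def by simp
    show ?thesis unfolding eqM e M_def by (rule upper_0[OF fin cG])
  next
    case False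
    then have e: "enh_number lam q k = (\<Sum>i=1..k. part_a lam i) + (part_a lam (Suc k) - 1)"
      unfolding enh_number_def by simp
    have G: "vec.dim M \<le> vec.dim ((X ^^ m) ` M)
       + (\<Sum>s<m. min (Suc k) (vec.dim ((X ^^ s) ` UNIV) - vec.dim ((X ^^ Suc s) ` UNIV)))"
      unfolding M_def by (rule dim_G[OF lin fin cG vec.subspace_UNIV]) auto
    have pw: "vec.dim ((X ^^ s) ` UNIV) - vec.dim ((X ^^ Suc s) ` UNIV) = cc s" for s
      unfolding cc_def by (rule cdiff)
    have S1: "(\<Sum>s<m. min (Suc k) (vec.dim ((X ^^ s) ` UNIV) - vec.dim ((X ^^ Suc s) ` UNIV)))
       = (\<Sum>s<m. min (Suc k) (cc s))"
      by (rule sum.cong[OF refl]) (simp only: pw)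
    have linm: "Vector_Spaces.linear (*s) (*s) (X ^^ m)" by (rule lin_pow[OF lin])
    have cm: "\<And>x. (X ^^ m) (X x) = X ((X ^^ m) x)" by (simp add: funpow_swap1)
    have img: "(X ^^ m) ` M = gen_mod X ((X ^^ m) ` Gs)"
      unfolding M_def by (rule gen_mod_img[of "X ^^ m" X, OF linm cm])
    have "(X ^^ m) (u + X z) = (X ^^ m) u + (X ^^ m) (X z)" by (rule vec.linear_add[OF linm])
    also have "\<dots> = X ((X ^^ m) z)" using U cm by simp
    finally have "(X ^^ m) ` Gs = insert (X ((X ^^ m) z)) ((\<lambda>i. (X ^^ m) (\<nu> i)) ` {1..k})"
      unfolding Gs_def by (simp add: image_image)
    then have img2: "(X ^^ m) ` M = gen_mod X (insert (X ((X ^^ m) z)) ((\<lambda>i. (X ^^ m) (\<nu> i)) ` {1..k}))"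
      using img by simp
    have T: "vec.dim ((X ^^ m) ` M) + 1 \<le> (\<Sum>s<CARD('n). min (Suc k) (cc (s + m)))"
      unfolding img2
    proof (rule trick_bound)
      show "(X ^^ m) z \<in> range (X ^^ m)" by simp
      show "(\<lambda>i. (X ^^ m) (\<nu> i)) ` {1..k} \<subseteq> range (X ^^ m)" by auto
      show "finite ((\<lambda>i. (X ^^ m) (\<nu> i)) ` {1..k})" by simp
      show "card ((\<lambda>i. (X ^^ m) (\<nu> i)) ` {1..k}) \<le> k"
        using card_image_le[of "{1..k}" "\<lambda>i. (X ^^ m) (\<nu> i)"] by simp
      show "Suc k \<le> cc m" using False q by simp
    qed
    have "(\<Sum>s<CARD('n) + m. min (Suc k) (cc s)) =
       (\<Sum>s<m. min (Suc k) (cc s)) + (\<Sum>s<CARD('n). min (Suc k) (cc (s + m)))"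
      by (rule sum_split_shift)
    also have "(\<Sum>s<CARD('n) + m. min (Suc k) (cc s)) = (\<Sum>i=1..Suc k. part_a lam i)"
      by (rule sum_cc) simp
    finally have "vec.dim M + 1 \<le> (\<Sum>i=1..k. part_a lam i) + part_a lam (Suc k)"
      using G S1 T sum_Suc_a[of k] by linarith
    then show ?thesis unfolding eqM e by linarith
  qed
qed

lemma dim_kX_le:
  assumes "(X ^^ m) u = 0"
  shows "vec.dim (kX X u) \<le> m"
proof -
  have "kX X u \<subseteq> vec.span ((\<lambda>s. (X ^^ s) u) ` {..<m})"
    unfolding kX_def
  proof (rule span_img_sub)
    fix y assume "y \<in> range (\<lambda>s. (X ^^ s) u)"
    then obtain s where y: "y = (X ^^ s) u" by blast
    show "y \<in> vec.span ((\<lambda>s. (X ^^ s) u) ` {..<m})"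
    proof (cases "s < m")
      case True
      then have "y \<in> (\<lambda>s. (X ^^ s) u) ` {..<m}" using y by blast
      then show ?thesis by (rule subsetD[OF vec.span_superset])
    next
      case False
      then have "y = (X ^^ (s - m)) ((X ^^ m) u)" using y by (simp add: pow_pow)
      then have "y = 0" using assms pow_zero[OF lin] by simp
      then show ?thesis using vec.span_zero by simp
    qed
  qed
  then have "vec.dim (kX X u) \<le> card ((\<lambda>s. (X ^^ s) u) ` {..<m})"
    by (rule vec.dim_le_card) simp
  also have "\<dots> \<le> m" using card_image_le[of "{..<m}" "\<lambda>s. (X ^^ s) u"] by simp
  finally show ?thesis .
qed

lemma cc_le: "cc m \<le> length lam"
proof -
  have "card {i\<in>{1..length lam}. m < part_a lam i} \<le> card {1..length lam}"
    by (rule card_mono) auto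
  then show ?thesis unfolding cc_def by simp
qed

lemma in_sp: "x \<in> S \<Longrightarrow> x \<in> vec.span S"
  by (rule subsetD[OF vec.span_superset])

lemma in_sp1: "x \<in> S \<Longrightarrow> x \<in> vec.span (S \<union> T)"
  by (rule in_sp, rule UnI1)

lemma in_sp2: "x \<in> T \<Longrightarrow> x \<in> vec.span (S \<union> T)"
  by (rule in_sp, rule UnI2)

lemma in_span_kX: "x \<in> kX X a \<Longrightarrow> x \<in> vec.span (kX X a \<union> B)"
  by (rule in_sp1)

lemma in_span_kXi: "x \<in> kX X (\<nu> i) \<Longrightarrow> i \<in> A \<Longrightarrow> x \<in> vec.span (C \<union> (\<Union>i\<in>A. kX X (\<nu> i)))"
  by (rule in_sp2, rule UN_I)

lemma card_Sig: "card (Sigma {1..k} (\<lambda>i. {..<part_a lam i})) = (\<Sum>i=1..k. part_a lam i)"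
  by (subst card_SigmaI) auto

lemma Sig_sub: "Sigma {1..k} (\<lambda>i. {..<part_a lam i}) \<subseteq> II"
proof
  fix x assume "x \<in> Sigma {1..k} (\<lambda>i. {..<part_a lam i})"
  then obtain i s where x: "x = (i, s)" "i \<in> {1..k}" "s < part_a lam i" by blast
  have "i \<le> length lam"
  proof (rule ccontr)
    assume "\<not> i \<le> length lam"
    then have "part_a lam i = 0" by (intro a_zero) simp
    then show False using x by simp
  qed
  then show "x \<in> II" unfolding II_def using x by auto
qed

lemma lower_lt:
  assumes p0: "1 \<le> p0" "part_a lam p0 = m" "q < p0"
    and uv: "(u = 0 \<and> m = 0) \<or> (u = v p0 \<and> p0 \<le> length lam)"
    and q: "q = cc m" and kq: "k < q"
  shows "enh_number lam q k \<le> vec.dim (vec.span (kX X (u + X (v (Suc k))) \<union> (\<Union>i\<in>{1..k}. kX X (v i))))"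
proof -
  define w where "w = u + X (v (Suc k))"
  define M where "M = vec.span (kX X w \<union> (\<Union>i\<in>{1..k}. kX X (v i)))"
  have U: "(X ^^ m) u = 0"
    using uv killm[of p0 m] p0 pow_zero[OF lin] by auto
  have kt: "Suc k \<le> length lam" using kq q cc_le[of m] by simp
  have ak: "1 \<le> part_a lam (Suc k)" using a_pos[of "Suc k"] kt by simp
  have e: "enh_number lam q k = (\<Sum>i=1..k. part_a lam i) + (part_a lam (Suc k) - 1)"
    unfolding enh_number_def using kq by simp
  have mp: "0 < m \<Longrightarrow> u = v p0 \<and> p0 \<le> length lam" using uv by auto
  define J1 where "J1 = Sigma {1..k} (\<lambda>i. {..<part_a lam i})"
  define J2 where "J2 = {Suc k} \<times> {1..<part_a lam (Suc k)}"
  define J3 where "J3 = {p0} \<times> {..<m}"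
  have J1s: "J1 \<subseteq> II" unfolding J1_def by (rule Sig_sub)
  have J2s: "J2 \<subseteq> II" unfolding J2_def II_def using kt by auto
  have J3s: "J3 \<subseteq> II"
  proof
    fix x assume "x \<in> J3"
    then obtain s where x: "x = (p0, s)" "s < m" unfolding J3_def by blast
    then have "p0 \<le> length lam" using mp by simp
    then show "x \<in> II" unfolding II_def using x p0 by simp
  qed
  have c1: "card J1 = (\<Sum>i=1..k. part_a lam i)" unfolding J1_def by (rule card_Sig)
  have c2: "card J2 = part_a lam (Suc k) - 1" unfolding J2_def by simp
  have c3: "card J3 = m" unfolding J3_def by simp
  have d12: "J1 \<inter> J2 = {}" unfolding J1_def J2_def by auto
  have d3: "(J1 \<union> J2) \<inter> J3 = {}" unfolding J1_def J2_def J3_def using p0 kq by auto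
  have fins: "finite J1" "finite J2" "finite J3" unfolding J1_def J2_def J3_def by auto
  have cJ: "card (J1 \<union> J2 \<union> J3) = (\<Sum>i=1..k. part_a lam i) + (part_a lam (Suc k) - 1) + m"
    using card_Un_disjoint[OF fins(1,2) d12] card_Un_disjoint[of "J1 \<union> J2" J3] fins d3 c1 c2 c3
    by simp
  have "ff ` (J1 \<union> J2 \<union> J3) \<subseteq> vec.span (M \<union> kX X u)"
  proof clarify
    fix i s assume "(i, s) \<in> J1 \<union> J2 \<union> J3"
    then consider "(i, s) \<in> J1" | "(i, s) \<in> J2" | "(i, s) \<in> J3" by blast
    then show "ff (i, s) \<in> vec.span (M \<union> kX X u)"
    proof cases
      case 1
      then have i: "i \<in> {1..k}" unfolding J1_def by auto
      have "ff (i, s) \<in> kX X (v i)" using kX_pow by simp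
      then have "ff (i, s) \<in> M" unfolding M_def using i by (rule in_span_kXi)
      then show ?thesis by (rule in_sp1)
    next
      case 2
      then have i: "i = Suc k" and s: "1 \<le> s" unfolding J2_def by auto
      define r where "r = s - 1"
      have sr: "s = Suc r" using s r_def by simp
      have linr: "Vector_Spaces.linear (*s) (*s) (X ^^ r)" by (rule lin_pow[OF lin])
      have "(X ^^ r) w = (X ^^ r) u + (X ^^ r) (X (v (Suc k)))"
        unfolding w_def by (rule vec.linear_add[OF linr])
      also have "(X ^^ r) (X (v (Suc k))) = ff (i, s)"
        using i sr by (simp add: funpow_swap1)
      finally have eq: "ff (i, s) = (X ^^ r) w - (X ^^ r) u" by simp
      have "(X ^^ r) w \<in> M" unfolding M_def by (rule in_span_kX[OF kX_pow])
      then have a: "(X ^^ r) w \<in> vec.span (M \<union> kX X u)" by (rule in_sp1)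
      have b: "(X ^^ r) u \<in> vec.span (M \<union> kX X u)" by (rule in_sp2[OF kX_pow])
      show ?thesis unfolding eq by (rule vec.span_diff[OF a b])
    next
      case 3
      then have i: "i = p0" and s: "s < m" unfolding J3_def by auto
      then have "u = v p0" using mp by simp
      then have "ff (i, s) = (X ^^ s) u" using i by simp
      then show ?thesis using in_sp2[of "(X ^^ s) u" "kX X u" M, OF kX_pow] by simp
    qed
  qed
  then have "card (J1 \<union> J2 \<union> J3) \<le> vec.dim (M \<union> kX X u)"
    by (rule card_le_dim[rotated]) (use J1s J2s J3s in blast)
  also have "\<dots> \<le> vec.dim M + vec.dim (kX X u)" by (rule dim_union_dim)
  also have "vec.dim (kX X u) \<le> m" by (rule dim_kX_le[OF U])
  finally have "(\<Sum>i=1..k. part_a lam i) + (part_a lam (Suc k) - 1) \<le> vec.dim M"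
    using cJ by simp
  then show ?thesis unfolding e M_def w_def by simp
qed

lemma a_pos_le: "0 < part_a lam i \<Longrightarrow> i \<le> length lam"
  using a_zero by (metis not_less neq0_conv)

lemma lower_ge:
  assumes p0: "1 \<le> p0" "part_a lam p0 = m" "q < p0"
    and uv: "(u = 0 \<and> m = 0) \<or> (u = v p0 \<and> p0 \<le> length lam)"
    and q: "q = cc m" and qk: "q \<le> k" and kt: "k \<le> length lam"
  shows "\<exists>\<nu>. enh_number lam q k \<le> vec.dim (vec.span (kX X (u + X 0) \<union> (\<Union>i\<in>{1..k}. kX X (\<nu> i))))"
proof -
  have X0: "X 0 = 0" by (rule vec.linear_0[OF lin])
  have e: "enh_number lam q k = (\<Sum>i=1..Suc k. part_a lam i)"
    unfolding enh_number_def using qk by simp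
  have mp: "0 < m \<Longrightarrow> u = v p0 \<and> p0 \<le> length lam" using uv by auto
  show ?thesis
  proof (cases "p0 \<le> Suc k")
    case True
    define \<nu> where "\<nu> i = v (if i < p0 then i else Suc i)" for i
    define S where "S = kX X u \<union> (\<Union>i\<in>{1..k}. kX X (\<nu> i))"
    define J where "J = Sigma {1..Suc k} (\<lambda>i. {..<part_a lam i})"
    have "ff ` J \<subseteq> vec.span S"
    proof
      fix x assume "x \<in> ff ` J"
      then obtain i s where x: "x = ff (i, s)" and i: "i \<in> {1..Suc k}" and s: "s < part_a lam i"
        unfolding J_def by blast
      consider "i = p0" | "i < p0" | "p0 < i" by linarith
      then show "x \<in> vec.span S"
      proof cases
        case 1
        then have "0 < m" using s p0 by simp
        then have "u = v p0" using mp by simp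
        then have "x = (X ^^ s) u" using x 1 by simp
        then show ?thesis unfolding S_def using in_sp1[OF kX_pow] by simp
      next
        case 2
        then have ii: "i \<in> {1..k}" using i True by auto
        have "\<nu> i = v i" unfolding \<nu>_def using 2 by simp
        then have "x \<in> kX X (\<nu> i)" using x kX_pow by simp
        then show ?thesis unfolding S_def using ii by (rule in_span_kXi)
      next
        case 3
        define i' where "i' = i - 1"
        have ii: "i' \<in> {1..k}" unfolding i'_def using i 3 p0 by auto
        have n1: "\<not> i' < p0" and n2: "Suc i' = i" unfolding i'_def using 3 p0 by arith+
        have "\<nu> i' = v i" unfolding \<nu>_def using n1 n2 by simp
        then have "x \<in> kX X (\<nu> i')" using x kX_pow by simp
        then show ?thesis unfolding S_def using ii by (rule in_span_kXi)
      qed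
    qed
    then have "card J \<le> vec.dim S" by (rule card_le_dim[rotated]) (unfold J_def, rule Sig_sub)
    moreover have "card J = (\<Sum>i=1..Suc k. part_a lam i)" unfolding J_def by (rule card_Sig)
    ultimately have "enh_number lam q k \<le> vec.dim (vec.span (kX X (u + X 0) \<union> (\<Union>i\<in>{1..k}. kX X (\<nu> i))))"
      unfolding e S_def X0 by simp
    then show ?thesis by blast
  next
    case False
    have ml: "m \<le> part_a lam (Suc k)" using a_anti[of "Suc k" p0] p0 False by simp
    have mg: "\<not> m < part_a lam (Suc k)"
    proof
      assume h: "m < part_a lam (Suc k)"
      have "{1..Suc k} \<subseteq> {i\<in>{1..length lam}. m < part_a lam i}"
      proof
        fix i assume i: "i \<in> {1..Suc k}"
        have "part_a lam (Suc k) \<le> part_a lam i" using a_anti[of i "Suc k"] i by simp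
        then have mi: "m < part_a lam i" using h by simp
        then have "i \<le> length lam" using a_pos_le by simp
        then show "i \<in> {i\<in>{1..length lam}. m < part_a lam i}" using i mi by simp
      qed
      then have "card {1..Suc k} \<le> cc m" unfolding cc_def by (rule card_mono[rotated]) simp
      then show False using q qk by simp
    qed
    have am: "part_a lam (Suc k) = m" using ml mg by simp
    define S where "S = kX X u \<union> (\<Union>i\<in>{1..k}. kX X (v i))"
    define J1 where "J1 = Sigma {1..k} (\<lambda>i. {..<part_a lam i})"
    define J3 where "J3 = {p0} \<times> {..<m}"
    have J3s: "J3 \<subseteq> II"
    proof
      fix x assume "x \<in> J3"
      then obtain s where x: "x = (p0, s)" "s < m" unfolding J3_def by blast
      then have "p0 \<le> length lam" using mp by simp
      then show "x \<in> II" unfolding II_def using x p0 by simp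
    qed
    have "ff ` (J1 \<union> J3) \<subseteq> vec.span S"
    proof
      fix x assume "x \<in> ff ` (J1 \<union> J3)"
      then obtain p where p: "p \<in> J1 \<union> J3" "x = ff p" by blast
      obtain i s where "p = (i, s)" by (cases p)
      then have x: "x = ff (i, s)" and iJ: "(i, s) \<in> J1 \<union> J3" using p by auto
      from iJ consider "(i, s) \<in> J1" | "(i, s) \<in> J3" by blast
      then show "x \<in> vec.span S"
      proof cases
        case 1
        then have ii: "i \<in> {1..k}" unfolding J1_def by auto
        have "x \<in> kX X (v i)" using x kX_pow by simp
        then show ?thesis unfolding S_def using ii by (rule in_span_kXi)
      next
        case 2
        then have i: "i = p0" and s: "s < m" unfolding J3_def by auto
        then have "u = v p0" using mp by simp
        then have "x = (X ^^ s) u" using x i by simp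
        then show ?thesis unfolding S_def using in_sp1[OF kX_pow] by simp
      qed
    qed
    then have "card (J1 \<union> J3) \<le> vec.dim S"
      by (rule card_le_dim[rotated]) (use J3s Sig_sub[of k] in \<open>unfold J1_def, blast\<close>)
    moreover have "card (J1 \<union> J3) = (\<Sum>i=1..k. part_a lam i) + m"
    proof -
      have d: "J1 \<inter> J3 = {}" unfolding J1_def J3_def using False by auto
      have "card (J1 \<union> J3) = card J1 + card J3"
        by (rule card_Un_disjoint) (use d in \<open>auto simp: J1_def J3_def\<close>)
      moreover have "card J1 = (\<Sum>i=1..k. part_a lam i)" unfolding J1_def by (rule card_Sig)
      moreover have "card J3 = m" unfolding J3_def by simp
      ultimately show ?thesis by simp
    qed
    ultimately have "enh_number lam q k \<le> vec.dim (vec.span (kX X (u + X 0) \<union> (\<Union>i\<in>{1..k}. kX X (v i))))"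
      unfolding e S_def X0 using am by simp
    then show ?thesis by blast
  qed
qed

end


lemma sorted_remdups_ge: "sorted_wrt (\<ge>) lam \<Longrightarrow> sorted_wrt (\<ge>) (remdups (lam::nat list))"
  by (induction lam) auto

lemma L_strict:
  assumes s: "sorted_wrt (\<ge>) (lam::nat list)" and ij: "i < j" "j < length (remdups lam)"
  shows "remdups lam ! j < remdups lam ! i"
proof -
  have "remdups lam ! j \<le> remdups lam ! i"
    using sorted_wrt_nth_less[OF sorted_remdups_ge[OF s] ij] by simp
  moreover have "remdups lam ! j \<noteq> remdups lam ! i"
    using nth_eq_iff_index_eq[OF distinct_remdups, of j lam i] ij by simp
  ultimately show ?thesis by simp
qed

lemma L_mono:
  assumes s: "sorted_wrt (\<ge>) (lam::nat list)" and ij: "i \<le> j" "j < length (remdups lam)"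
  shows "remdups lam ! j \<le> remdups lam ! i"
  using L_strict[OF s, of i j] ij by (cases "i = j") auto

lemma L_step:
  assumes s: "sorted_wrt (\<ge>) (lam::nat list)" and j: "2 \<le> j" "j \<le> length (remdups lam)"
    and x: "x \<in> set lam"
  shows "remdups lam ! (j - 2) \<le> x \<longleftrightarrow> remdups lam ! (j - 1) < x"
proof -
  let ?L = "remdups lam"
  obtain l where l: "l < length ?L" "?L ! l = x" using x by (metis in_set_conv_nth set_remdups)
  show ?thesis
  proof
    assume "?L ! (j - 2) \<le> x"
    moreover have "?L ! (j - 1) < ?L ! (j - 2)" using L_strict[OF s, of "j - 2" "j - 1"] j by simp
    ultimately show "?L ! (j - 1) < x" by simp
  next
    assume h: "?L ! (j - 1) < x"
    have "l < j - 1"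
    proof (rule ccontr)
      assume "\<not> l < j - 1"
      then have "?L ! l \<le> ?L ! (j - 1)" using L_mono[OF s, of "j - 1" l] l by simp
      then show False using h l by simp
    qed
    then have "l \<le> j - 2" by simp
    then have "?L ! (j - 2) \<le> ?L ! l" using L_mono[OF s, of l "j - 2"] j by simp
    then show "?L ! (j - 2) \<le> x" using l by simp
  qed
qed

lemma L_max:
  assumes s: "sorted_wrt (\<ge>) (lam::nat list)" and x: "x \<in> set lam"
  shows "x \<le> remdups lam ! 0"
proof -
  obtain l where l: "l < length (remdups lam)" "remdups lam ! l = x" using x by (metis in_set_conv_nth set_remdups)
  then show ?thesis using L_mono[OF s, of 0 l] by simp
qed

lemma L_min:
  assumes s: "sorted_wrt (\<ge>) (lam::nat list)" and x: "x \<in> set lam"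
  shows "remdups lam ! (length (remdups lam) - 1) \<le> x"
proof -
  obtain l where l: "l < length (remdups lam)" "remdups lam ! l = x" using x by (metis in_set_conv_nth set_remdups)
  then show ?thesis using L_mono[OF s, of l "length (remdups lam) - 1"] by simp
qed

lemma card_idx_filter:
  "card {i\<in>{1..length lam}. P (part_a lam i)} = length (filter P lam)"
proof -
  have "{i\<in>{1..length lam}. P (part_a lam i)} = Suc ` {i. i < length lam \<and> P (lam ! i)}"
  proof (rule set_eqI, rule iffI)
    fix i assume "i \<in> {i\<in>{1..length lam}. P (part_a lam i)}"
    then have "i - 1 \<in> {i. i < length lam \<and> P (lam ! i)}" "i = Suc (i - 1)"
      unfolding part_a_def by auto
    then show "i \<in> Suc ` {i. i < length lam \<and> P (lam ! i)}" by blast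
  next
    fix i assume "i \<in> Suc ` {i. i < length lam \<and> P (lam ! i)}"
    then obtain i' where "i = Suc i'" "i' < length lam" "P (lam ! i')" by blast
    then show "i \<in> {i\<in>{1..length lam}. P (part_a lam i)}" unfolding part_a_def by auto
  qed
  then have "card {i\<in>{1..length lam}. P (part_a lam i)} = card {i. i < length lam \<and> P (lam ! i)}"
    by (simp add: card_image)
  then show ?thesis by (simp add: length_filter_conv_card)
qed

lemma a_in_set: "i \<in> {1..length lam} \<Longrightarrow> part_a lam i \<in> set lam"
  unfolding part_a_def by auto

lemma card_split:
  "card {i\<in>{1..length lam}. c \<le> part_a lam i} =
   card {i\<in>{1..length lam}. c < part_a lam i} + card {i\<in>{1..length lam}. part_a lam i = c}"
proof -
  have "{i\<in>{1..length lam}. c \<le> part_a lam i} =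
     {i\<in>{1..length lam}. c < part_a lam i} \<union> {i\<in>{1..length lam}. part_a lam i = c}" by auto
  moreover have "card (\<dots>) = card {i\<in>{1..length lam}. c < part_a lam i} + card {i\<in>{1..length lam}. part_a lam i = c}"
    by (rule card_Un_disjoint) auto
  ultimately show ?thesis by simp
qed

lemma D_Suc: "1 \<le> j \<Longrightarrow> part_D lam j = part_D lam (j - 1) + part_d lam j"
  unfolding part_D_def by (cases j) auto

lemma D_claim:
  assumes s: "sorted_wrt (\<ge>) (lam::nat list)"
  shows "1 \<le> j \<Longrightarrow> j \<le> part_r lam \<Longrightarrow>
    part_D lam (j - 1) = card {i\<in>{1..length lam}. part_b lam j < part_a lam i} \<and>
    part_D lam j = card {i\<in>{1..length lam}. part_b lam j \<le> part_a lam i}"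
proof (induction j)
  case 0 then show ?case by simp
next
  case (Suc j)
  have d: "part_d lam (Suc j) = card {i\<in>{1..length lam}. part_a lam i = part_b lam (Suc j)}"
    unfolding part_d_def using card_idx_filter[of lam "\<lambda>x. x = part_b lam (Suc j)"] by simp
  have first: "part_D lam j = card {i\<in>{1..length lam}. part_b lam (Suc j) < part_a lam i}"
  proof (cases "j = 0")
    case True
    have n: "\<not> part_b lam (Suc j) < part_a lam i" if "i \<in> {1..length lam}" for i
      using L_max[OF s a_in_set[OF that]] True unfolding part_b_def by simp
    have "{i\<in>{1..length lam}. part_b lam (Suc j) < part_a lam i} = {}"
      using n by blast
    then show ?thesis using True by (simp add: part_D_def part_d_def)
  next
    case False
    have IH: "part_D lam j = card {i\<in>{1..length lam}. part_b lam j \<le> part_a lam i}"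
      using Suc False by simp
    have "{i\<in>{1..length lam}. part_b lam j \<le> part_a lam i} =
       {i\<in>{1..length lam}. part_b lam (Suc j) < part_a lam i}"
    proof (rule Collect_cong, rule conj_cong[OF refl])
      fix i assume "i \<in> {1..length lam}"
      then have x: "part_a lam i \<in> set lam" by (rule a_in_set)
      have "2 \<le> Suc j" "Suc j \<le> length (remdups lam)" using False Suc.prems unfolding part_r_def by auto
      from L_step[OF s this x] show "part_b lam j \<le> part_a lam i \<longleftrightarrow> part_b lam (Suc j) < part_a lam i"
        unfolding part_b_def by simp
    qed
    then show ?thesis using IH by simp
  qed
  show ?case using first D_Suc[of "Suc j" lam] d card_split[of lam "part_b lam (Suc j)"] by simp
qed

lemma D_r:
  assumes s: "sorted_wrt (\<ge>) (lam::nat list)"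
  shows "part_D lam (part_r lam) = length lam"
proof (cases "part_r lam = 0")
  case True
  then have "lam = []" unfolding part_r_def by simp
  then show ?thesis using True by (simp add: part_D_def part_d_def)
next
  case False
  have "part_D lam (part_r lam) = card {i\<in>{1..length lam}. part_b lam (part_r lam) \<le> part_a lam i}"
    using D_claim[OF s, of "part_r lam"] False by simp
  also have "{i\<in>{1..length lam}. part_b lam (part_r lam) \<le> part_a lam i} = {1..length lam}"
  proof (rule set_eqI, rule iffI)
    fix i assume "i \<in> {1..length lam}"
    then show "i \<in> {i\<in>{1..length lam}. part_b lam (part_r lam) \<le> part_a lam i}"
      using L_min[OF s a_in_set[of i lam]] unfolding part_b_def part_r_def by simp
  qed simp
  finally show ?thesis by simp
qed

lemma b_in: "1 \<le> j \<Longrightarrow> j \<le> part_r lam \<Longrightarrow> part_b lam j \<in> set lam"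
proof -
  assume "1 \<le> j" "j \<le> part_r lam"
  then have "j - 1 < length (remdups lam)" unfolding part_r_def by simp
  then have "remdups lam ! (j - 1) \<in> set (remdups lam)" by (rule nth_mem)
  then show ?thesis unfolding part_b_def by simp
qed



context jordan
begin

lemma canon:
  assumes p0: "1 \<le> p0" "part_a lam p0 = m" "q < p0"
    and uv: "(u = 0 \<and> m = 0) \<or> (u = v p0 \<and> p0 \<le> length lam)"
    and q: "q = cc m" and kt: "k \<le> length lam"
  shows "vec.dim (vec.span (kX X (u + X z) \<union> (\<Union>i\<in>{1..k}. kX X (\<nu> i)))) \<le> enh_number lam q k"
    and "\<exists>z \<nu>. vec.dim (vec.span (kX X (u + X z) \<union> (\<Union>i\<in>{1..k}. kX X (\<nu> i)))) = enh_number lam q k"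
proof -
  have U: "(X ^^ m) u = 0"
  proof (cases "u = 0 \<and> m = 0")
    case True then show ?thesis by simp
  next
    case False
    then have "u = v p0" "p0 \<le> length lam" using uv by auto
    then show ?thesis using killm[of p0 m] p0 by simp
  qed
  show up: "vec.dim (vec.span (kX X (u + X z) \<union> (\<Union>i\<in>{1..k}. kX X (\<nu> i)))) \<le> enh_number lam q k"
    for z \<nu> by (rule upper_main[OF U q])
  show "\<exists>z \<nu>. vec.dim (vec.span (kX X (u + X z) \<union> (\<Union>i\<in>{1..k}. kX X (\<nu> i)))) = enh_number lam q k"
  proof (cases "k < q")
    case True
    have "enh_number lam q k \<le> vec.dim (vec.span (kX X (u + X (v (Suc k))) \<union> (\<Union>i\<in>{1..k}. kX X (v i))))"
      by (rule lower_lt[OF p0 uv q True])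
    then show ?thesis using up[of "v (Suc k)" v] le_antisym by blast
  next
    case False
    then obtain \<nu> where "enh_number lam q k \<le> vec.dim (vec.span (kX X (u + X 0) \<union> (\<Union>i\<in>{1..k}. kX X (\<nu> i))))"
      using lower_ge[OF p0 uv q _ kt] by fastforce
    then show ?thesis using up[of 0 \<nu>] le_antisym by blast
  qed
qed

lemma data:
  assumes ei: "enh_index lam q j"
  shows "\<exists>p0 m. 1 \<le> p0 \<and> part_a lam p0 = m \<and> q < p0 \<and>
    ((u_vec lam v j = 0 \<and> m = 0) \<or> (u_vec lam v j = v p0 \<and> p0 \<le> length lam)) \<and> q = cc m"
proof -
  have s: "sorted_wrt (\<ge>) lam" using part unfolding is_partition_of_def by simp
  have j: "1 \<le> j" "j \<le> part_r lam + 1" and qD: "q = part_D lam (j - 1)"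
    using ei unfolding enh_index_def by auto
  show ?thesis
  proof (cases "j = part_r lam + 1")
    case True
    have qt: "q = length lam" using qD True D_r[OF s] by simp
    have u0: "u_vec lam v j = 0" unfolding u_vec_def using True by simp
    have "{i\<in>{1..length lam}. 0 < part_a lam i} = {1..length lam}" using a_pos by auto
    then have c0: "cc 0 = length lam" unfolding cc_def by simp
    show ?thesis
      by (rule exI[of _ "Suc (length lam)"], rule exI[of _ 0]) (use qt u0 c0 a_zero in simp)
  next
    case False
    then have jr: "j \<le> part_r lam" using j by simp
    define b where "b = part_b lam j"
    define p0 where "p0 = part_D lam j"
    have DC: "q = card {i\<in>{1..length lam}. b < part_a lam i}"
         "p0 = card {i\<in>{1..length lam}. b \<le> part_a lam i}"
      using D_claim[OF s j(1) jr] qD unfolding b_def p0_def by auto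
    have qc: "q = cc b" unfolding cc_def using DC by simp
    have uv: "u_vec lam v j = v p0" unfolding u_vec_def p0_def using jr by simp
    have pt: "p0 \<le> length lam"
    proof -
      have "card {i\<in>{1..length lam}. b \<le> part_a lam i} \<le> card {1..length lam}"
        by (rule card_mono) auto
      then show ?thesis using DC by simp
    qed
    have bin: "b \<in> set lam" unfolding b_def by (rule b_in[OF j(1) jr])
    then obtain l where l: "l < length lam" "lam ! l = b" by (metis in_set_conv_nth)
    have al: "part_a lam (Suc l) = b" unfolding part_a_def using l by simp
    have "Suc l \<in> {i\<in>{1..length lam}. part_a lam i = b}" using al l by simp
    then have "card {i\<in>{1..length lam}. part_a lam i = b} \<ge> 1"
      using card_gt_0_iff[of "{i\<in>{1..length lam}. part_a lam i = b}"] by fastforce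
    then have qp: "q < p0" using DC card_split[of lam b] by simp
    have ap: "part_a lam p0 = b"
    proof (rule antisym)
      show "part_a lam p0 \<le> b"
      proof (rule ccontr)
        assume h: "\<not> part_a lam p0 \<le> b"
        have "{1..p0} \<subseteq> {i\<in>{1..length lam}. b < part_a lam i}"
        proof
          fix i assume i: "i \<in> {1..p0}"
          then have "part_a lam p0 \<le> part_a lam i" using a_anti[of i p0] by simp
          then show "i \<in> {i\<in>{1..length lam}. b < part_a lam i}" using h i pt by auto
        qed
        then have "card {1..p0} \<le> card {i\<in>{1..length lam}. b < part_a lam i}"
          by (rule card_mono[rotated]) simp
        then have "card {1..p0} \<le> q" using DC(1) by simp
        then show False using qp by simp
      qed
      show "b \<le> part_a lam p0"
      proof (rule ccontr)
        assume h: "\<not> b \<le> part_a lam p0"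
        have "{i\<in>{1..length lam}. b \<le> part_a lam i} \<subseteq> {1..p0 - 1}"
        proof
          fix i assume i: "i \<in> {i\<in>{1..length lam}. b \<le> part_a lam i}"
          have "i < p0"
          proof (rule ccontr)
            assume "\<not> i < p0"
            then have "part_a lam i \<le> part_a lam p0" using a_anti[of p0 i] qp by simp
            then show False using h i by simp
          qed
          then show "i \<in> {1..p0 - 1}" using i by auto
        qed
        then have "card {i\<in>{1..length lam}. b \<le> part_a lam i} \<le> card {1..p0 - 1}"
          by (rule card_mono[rotated]) simp
        moreover have "card {1..p0 - 1} = p0 - 1" by simp
        ultimately have "p0 \<le> p0 - 1" using DC(2) by (simp only:)
        then show False using qp by linarith
      qed
    qed
    show ?thesis
      by (rule exI[of _ p0], rule exI[of _ b]) (use qp ap uv pt qc in simp)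
  qed
qed

end

lemma tr_pow:
  fixes g X0 :: "'k::field^'n \<Rightarrow> 'k^'n"
  assumes "bij g"
  shows "((g \<circ> X0 \<circ> inv g) ^^ n) (g x) = g ((X0 ^^ n) x)"
proof (induction n)
  case 0 then show ?case by simp
next
  case (Suc n)
  have "inv g (g ((X0 ^^ n) x)) = (X0 ^^ n) x" using assms bij_is_inj inv_f_f by metis
  then show ?case using Suc by simp
qed

lemma tr_kX:
  fixes g X0 :: "'k::field^'n \<Rightarrow> 'k^'n"
  assumes lg: "Vector_Spaces.linear (*s) (*s) g" and b: "bij g"
  shows "kX (g \<circ> X0 \<circ> inv g) (g x) = g ` kX X0 x"
proof -
  have "range (\<lambda>n. ((g \<circ> X0 \<circ> inv g) ^^ n) (g x)) = g ` range (\<lambda>n. (X0 ^^ n) x)"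
    using tr_pow[OF b] by (auto simp: image_image)
  then show ?thesis unfolding kX_def using vec.linear_span_image[OF lg] by simp
qed

lemma tr_dim:
  fixes g X0 :: "'k::field^'n \<Rightarrow> 'k^'n"
  assumes lg: "Vector_Spaces.linear (*s) (*s) g" and b: "bij g"
  shows "vec.dim (vec.span (kX (g \<circ> X0 \<circ> inv g) (g a) \<union> (\<Union>i\<in>A. kX (g \<circ> X0 \<circ> inv g) (g (c i)))))
       = vec.dim (vec.span (kX X0 a \<union> (\<Union>i\<in>A. kX X0 (c i))))"
proof -
  have "kX (g \<circ> X0 \<circ> inv g) (g a) \<union> (\<Union>i\<in>A. kX (g \<circ> X0 \<circ> inv g) (g (c i)))
      = g ` (kX X0 a \<union> (\<Union>i\<in>A. kX X0 (c i)))"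
    using tr_kX[OF lg b] by (simp add: image_Un image_UN)
  then have "vec.span (kX (g \<circ> X0 \<circ> inv g) (g a) \<union> (\<Union>i\<in>A. kX (g \<circ> X0 \<circ> inv g) (g (c i))))
      = g ` vec.span (kX X0 a \<union> (\<Union>i\<in>A. kX X0 (c i)))"
    using vec.linear_span_image[OF lg] by simp
  also have "vec.dim \<dots> = vec.dim (vec.span (kX X0 a \<union> (\<Union>i\<in>A. kX X0 (c i))))"
    by (rule vec.dim_image_eq[OF lg]) (use b bij_is_inj inj_on_subset in blast)
  finally show ?thesis .
qed

theorem lemma3p9:
  fixes X :: "'k::alg_closed_field ^ 'n \<Rightarrow> 'k ^ 'n" and w :: "'k ^ 'n"
    and lam :: "nat list" and q k :: nat
  assumes "is_partition_of lam CARD('n)"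
    and "(X, w) \<in> enh_orbit lam q"
    and "k \<le> length lam"
  shows "enh_number lam q k =
    Max {vec.dim (vec.span (kX X w' \<union> (\<Union>i\<in>{1..k}. kX X (\<nu> i)))) | w' \<nu>.
           w' \<in> (\<lambda>z. w + z) ` range X}"
proof -
  obtain g y X0 v j where XW: "(X, w) = Ad_action g y X0 (u_vec lam v j)"
    and GL: "is_GL g" and l0: "Vector_Spaces.linear (*s) (*s) X0" and jb: "jordan_basis X0 lam v"
    and ei: "enh_index lam q j"
    using assms(2) unfolding enh_orbit_def by blast
  interpret J: jordan X0 lam v unfolding jordan_def using l0 jb assms(1) by blast
  define u where "u = u_vec lam v j"
  have lg: "Vector_Spaces.linear (*s) (*s) g" and b: "bij g" using GL unfolding is_GL_def by auto
  have ig: "Vector_Spaces.linear (*s) (*s) (inv g)"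
    by (rule vec.inj_linear_imp_inv_linear[OF lg bij_is_inj[OF b]])
  have gi: "g (inv g x) = x" for x using b by (simp add: bij_is_surj surj_f_inv_f)
  have ig2: "inv g (g x) = x" for x using b by (simp add: bij_is_inj inv_f_f)
  have Xd: "X = g \<circ> X0 \<circ> inv g" and wd: "w = - (X y) + g u"
    using XW unfolding Ad_action_def u_def by auto
  obtain p0 m where pm: "1 \<le> p0" "part_a lam p0 = m" "q < p0"
    "(u = 0 \<and> m = 0) \<or> (u = v p0 \<and> p0 \<le> length lam)" "q = J.cc m"
    using J.data[OF ei] unfolding u_def by blast
  define S where "S = {vec.dim (vec.span (kX X w' \<union> (\<Union>i\<in>{1..k}. kX X (\<nu> i)))) | w' \<nu>.
           w' \<in> (\<lambda>z. w + z) ` range X}"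
  have key: "w + X z' = g (u + X0 (inv g z' - inv g y))" for z'
  proof -
    have "g (u + X0 (inv g z' - inv g y)) = g u + g (X0 (inv g z')) - g (X0 (inv g y))"
      by (simp add: vec.linear_add[OF lg] vec.linear_diff[OF lg] vec.linear_diff[OF l0])
    then show ?thesis unfolding wd Xd by simp
  qed
  have ub: "x \<le> enh_number lam q k" if "x \<in> S" for x
  proof -
    obtain w' \<nu> where x: "x = vec.dim (vec.span (kX X w' \<union> (\<Union>i\<in>{1..k}. kX X (\<nu> i))))"
      and w': "w' \<in> (\<lambda>z. w + z) ` range X" using \<open>x \<in> S\<close> unfolding S_def by blast
    obtain z' where z': "w' = w + X z'" using w' by blast
    define zz where "zz = inv g z' - inv g y"
    have w'g: "w' = g (u + X0 zz)" unfolding z' zz_def by (rule key)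
    have \<nu>g: "\<nu> i = g (inv g (\<nu> i))" for i using gi by simp
    have "x = vec.dim (vec.span (kX (g \<circ> X0 \<circ> inv g) (g (u + X0 zz)) \<union>
        (\<Union>i\<in>{1..k}. kX (g \<circ> X0 \<circ> inv g) (g (inv g (\<nu> i))))))"
      unfolding x w'g Xd using gi by simp
    also have "\<dots> = vec.dim (vec.span (kX X0 (u + X0 zz) \<union> (\<Union>i\<in>{1..k}. kX X0 (inv g (\<nu> i)))))"
      by (rule tr_dim[OF lg b])
    also have "\<dots> \<le> enh_number lam q k"
      by (rule J.canon(1)[OF pm assms(3)])
    finally show ?thesis .
  qed
  obtain z \<nu> where zn: "vec.dim (vec.span (kX X0 (u + X0 z) \<union> (\<Union>i\<in>{1..k}. kX X0 (\<nu> i)))) = enh_number lam q k"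
    using J.canon(2)[OF pm assms(3)] by blast
  have mem: "enh_number lam q k \<in> S"
  proof -
    have "X (y + g z) = X y + g (X0 z)"
      unfolding Xd using vec.linear_add[OF ig] vec.linear_add[OF lg] vec.linear_add[OF l0] ig2
      by simp
    then have "w + X (y + g z) = g (u + X0 z)" unfolding wd using vec.linear_add[OF lg] by simp
    then have inr: "g (u + X0 z) \<in> (\<lambda>z. w + z) ` range X" by (metis rangeI image_eqI)
    have "vec.dim (vec.span (kX X (g (u + X0 z)) \<union> (\<Union>i\<in>{1..k}. kX X (g (\<nu> i)))))
        = enh_number lam q k"
      unfolding Xd tr_dim[OF lg b] zn ..
    then have "\<exists>w' \<nu>'. enh_number lam q k = vec.dim (vec.span (kX X w' \<union> (\<Union>i\<in>{1..k}. kX X (\<nu>' i))))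
       \<and> w' \<in> (\<lambda>z. w + z) ` range X"
      using inr by (intro exI[of _ "g (u + X0 z)"] exI[of _ "\<lambda>i. g (\<nu> i)"]) simp
    then show ?thesis unfolding S_def by (rule CollectI)
  qed
  have fin: "finite S" using ub by (meson finite_atMost atMost_iff finite_subset subsetI)
  have "Max S = enh_number lam q k"
    by (rule Max_eqI[OF fin ub mem])
  then show ?thesis unfolding S_def by simp
qed


end
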